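(* Let $G$ be a perfect matching on $n=2k$ vertices labelled $u_iw_j$ with $i\in\{1,\dots,k\}$ and $j\in\{1,2\}$. Then $\rho(G)$ is separable in $\mathbb{C}^k_A\otimes\mathbb{C}^2_B$ if and only if $\Delta(G)=\Delta(G^{\Gamma_B})$.
   Context: A perfect matching is a simple graph $G=(V,E)$ in which every vertex $v$ belongs to exactly one edge. For a simple graph: $M(G)$ is the adjacency matrix, $\Delta(G)$ the diagonal degree matrix, $L(G)=\Delta(G)-M(G)$, $\rho(G)=\frac{1}{2|E|}L(G)$. Vertex $u_iw_j$ is identified with $|u_i\rangle\otimes|w_j\rangle$ for orthonormal bases $\{|u_i\rangle\}$ of $\mathbb{C}^k_A$ and $\{|w_j\rangle\}$ of $\mathbb{C}^2_B$. The partial transpose $G^{\Gamma_B}=(V,E')$ has $\{u_iw_j,u_{i'}w_{j'}\}\in E'$ iff $\{u_iw_{j'},u_{i'}w_j\}\in E$. Separable means a convex combination of product states. *)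

theory Defs
  imports Complex_Main
begin

text \<open>Vertices are pairs (i,j): i indexes the basis of C^k_A (a finite type 'a with CARD('a) = k),
j indexes the basis of C^2_B (the type bool, two elements).\<close>

type_synonym 'i cmat = "'i \<Rightarrow> 'i \<Rightarrow> complex"

definition simple_graph :: "('v \<Rightarrow> 'v \<Rightarrow> bool) \<Rightarrow> bool" where
  "simple_graph E \<longleftrightarrow> (\<forall>v w. E v w \<longrightarrow> E w v) \<and> (\<forall>v. \<not> E v v)"

definition perfect_matching :: "('v \<Rightarrow> 'v \<Rightarrow> bool) \<Rightarrow> bool" where
  "perfect_matching E \<longleftrightarrow> simple_graph E \<and> (\<forall>v. \<exists>!w. E v w)"

definition degree :: "('v::finite \<Rightarrow> 'v \<Rightarrow> bool) \<Rightarrow> 'v \<Rightarrow> nat" where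
  "degree E v = card {w. E v w}"

definition num_edges :: "('v::finite \<Rightarrow> 'v \<Rightarrow> bool) \<Rightarrow> nat" where
  "num_edges E = card {{v, w} | v w. E v w}"

definition adj_mat :: "('v::finite \<Rightarrow> 'v \<Rightarrow> bool) \<Rightarrow> 'v cmat" where
  "adj_mat E v w = (if E v w then 1 else 0)"

definition deg_mat :: "('v::finite \<Rightarrow> 'v \<Rightarrow> bool) \<Rightarrow> 'v cmat" where
  "deg_mat E v w = (if v = w then of_nat (degree E v) else 0)"

definition laplacian :: "('v::finite \<Rightarrow> 'v \<Rightarrow> bool) \<Rightarrow> 'v cmat" where
  "laplacian E v w = deg_mat E v w - adj_mat E v w"

definition density_of_graph :: "('v::finite \<Rightarrow> 'v \<Rightarrow> bool) \<Rightarrow> 'v cmat" where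
  "density_of_graph E v w = laplacian E v w / of_nat (2 * num_edges E)"

definition partial_transpose_graph ::
  "('a \<times> 'b \<Rightarrow> 'a \<times> 'b \<Rightarrow> bool) \<Rightarrow> 'a \<times> 'b \<Rightarrow> 'a \<times> 'b \<Rightarrow> bool" where
  "partial_transpose_graph E = (\<lambda>(i, j) (i', j'). E (i, j') (i', j))"

definition hermitian :: "('i::finite) cmat \<Rightarrow> bool" where
  "hermitian M \<longleftrightarrow> (\<forall>i j. M i j = cnj (M j i))"

definition psd :: "('i::finite) cmat \<Rightarrow> bool" where
  "psd M \<longleftrightarrow> hermitian M \<and>
     (\<forall>x :: 'i \<Rightarrow> complex. 0 \<le> Re (\<Sum>i\<in>UNIV. \<Sum>j\<in>UNIV. cnj (x i) * M i j * x j))"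

definition trace :: "('i::finite) cmat \<Rightarrow> complex" where
  "trace M = (\<Sum>i\<in>UNIV. M i i)"

definition density_matrix :: "('i::finite) cmat \<Rightarrow> bool" where
  "density_matrix M \<longleftrightarrow> psd M \<and> trace M = 1"

text \<open>Tensor (Kronecker) product, with (i,j) identified with |u_i> \<otimes> |w_j>.\<close>
definition tensor :: "'a cmat \<Rightarrow> 'b cmat \<Rightarrow> ('a \<times> 'b) cmat" where
  "tensor A B = (\<lambda>(i, j) (i', j'). A i i' * B j j')"

definition separable :: "(('a::finite) \<times> ('b::finite)) cmat \<Rightarrow> bool" where
  "separable \<rho> \<longleftrightarrow> (\<exists>(n::nat) (p :: nat \<Rightarrow> real) (A :: nat \<Rightarrow> 'a cmat) (B :: nat \<Rightarrow> 'b cmat).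
      (\<forall>m<n. 0 \<le> p m \<and> density_matrix (A m) \<and> density_matrix (B m)) \<and>
      (\<Sum>m<n. p m) = 1 \<and>
      \<rho> = (\<lambda>v w. \<Sum>m<n. of_real (p m) * tensor (A m) (B m) v w))"

end

theory Submission
  imports Defs "HOL-Combinatorics.Cycles"
begin


definition vt :: "('a \<Rightarrow> complex) \<Rightarrow> ('b \<Rightarrow> complex) \<Rightarrow> 'a \<times> 'b \<Rightarrow> complex" where
  "vt a b = (\<lambda>(i, j). a i * b j)"

definition nsq :: "('a::finite \<Rightarrow> complex) \<Rightarrow> real" where
  "nsq a = (\<Sum>i\<in>UNIV. (cmod (a i))\<^sup>2)"

definition dm :: "('a::finite \<Rightarrow> complex) \<Rightarrow> 'a cmat" where
  "dm a = (if nsq a = 0 then (\<lambda>i j. if i = undefined \<and> j = undefined then 1 else 0)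
           else (\<lambda>i j. a i * cnj (a j) / of_real (nsq a)))"

lemma complex_mult_cnj_cmod: "z * cnj z = of_real ((cmod z)\<^sup>2)"
  by (metis complex_norm_square)

lemma nsq_nonneg: "0 \<le> nsq a"
  unfolding nsq_def by (simp add: sum_nonneg)

lemma nsq_zero: "nsq a = 0 \<Longrightarrow> a i = 0"
proof -
  assume "nsq a = 0"
  hence "\<forall>i\<in>UNIV. (cmod (a i))\<^sup>2 = 0"
    unfolding nsq_def by (subst sum_nonneg_eq_0_iff[symmetric]) auto
  thus ?thesis by simp
qed

lemma quad_outer:
  "(\<Sum>i\<in>UNIV. \<Sum>j\<in>UNIV. cnj (x i) * (a i * cnj (a j)) * x j)
     = (\<Sum>i\<in>UNIV. cnj (x i) * a i) * cnj (\<Sum>j\<in>UNIV. cnj (x j) * a j)"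
  apply (simp add: sum_distrib_left sum_distrib_right mult_ac)
  apply (rule sum.swap)
  done

lemma sum_single2:
  fixes f :: "'a::finite \<Rightarrow> 'a \<Rightarrow> complex"
  shows "(\<Sum>i\<in>UNIV. \<Sum>j\<in>UNIV. if i = u \<and> j = u then f i j else 0) = f u u"
proof -
  have "(\<Sum>j\<in>UNIV. if i = u \<and> j = u then f i j else 0) = (if i = u then f i u else 0)" for i
    by (cases "i = u") auto
  thus ?thesis by simp
qed

lemma dm_density: "density_matrix (dm (a::'a::finite \<Rightarrow> complex))"
proof (cases "nsq a = 0")
  case True
  hence d: "dm a = (\<lambda>i j. if i = undefined \<and> j = undefined then 1 else 0)" unfolding dm_def by simp
  show ?thesis unfolding density_matrix_def psd_def hermitian_def trace_def d
  proof (intro conjI allI)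
    fix x :: "'a \<Rightarrow> complex"
    have "(\<Sum>i\<in>UNIV. \<Sum>j\<in>UNIV. cnj (x i) * (if i = undefined \<and> j = undefined then 1 else 0) * x j)
      = (\<Sum>i\<in>UNIV. \<Sum>j\<in>UNIV. if i = undefined \<and> j = undefined then cnj (x i) * x j else 0)"
      by (intro sum.cong) auto
    also have "\<dots> = cnj (x undefined) * x undefined" by (rule sum_single2)
    finally show "0 \<le> Re (\<Sum>i\<in>UNIV. \<Sum>j\<in>UNIV. cnj (x i) * (if i = undefined \<and> j = undefined then 1 else 0) * x j)"
      by (simp add: complex_mult_cnj_cmod mult.commute[of "cnj _"])
  qed auto
next
  case False
  hence pos: "nsq a > 0" using nsq_nonneg[of a] by simp
  have herm: "hermitian (dm a)" unfolding hermitian_def dm_def using False by simp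
  have q: "(\<Sum>i\<in>UNIV. \<Sum>j\<in>UNIV. cnj (x i) * dm a i j * x j)
     = ((\<Sum>i\<in>UNIV. cnj (x i) * a i) * cnj (\<Sum>j\<in>UNIV. cnj (x j) * a j)) / of_real (nsq a)" for x
    unfolding dm_def using False quad_outer[of x a]
    by (simp add: sum_divide_distrib[symmetric])
  have "0 \<le> Re (\<Sum>i\<in>UNIV. \<Sum>j\<in>UNIV. cnj (x i) * dm a i j * x j)" for x
    unfolding q complex_mult_cnj_cmod of_real_divide[symmetric] Re_complex_of_real using pos by simp
  moreover have "trace (dm a) = 1"
  proof -
    have "trace (dm a) = (\<Sum>i\<in>UNIV. of_real ((cmod (a i))\<^sup>2)) / of_real (nsq a)"
      unfolding trace_def dm_def using False
      by (simp add: sum_divide_distrib[symmetric] complex_mult_cnj_cmod)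
    also have "(\<Sum>i\<in>UNIV. of_real ((cmod (a i))\<^sup>2)) = (of_real (nsq a) :: complex)"
      by (simp only: nsq_def of_real_sum)
    also have "(of_real (nsq a) :: complex) / of_real (nsq a) = 1" using False by simp
    finally show ?thesis .
  qed
  ultimately show ?thesis using herm unfolding density_matrix_def psd_def by simp
qed

lemma dm_eq: "of_real (nsq a) * dm a i j = a i * cnj (a j)"
proof (cases "nsq a = 0")
  case True thus ?thesis using nsq_zero[OF True] by simp
next
  case False thus ?thesis unfolding dm_def by simp
qed

lemma nsq_vt: "nsq (vt a b) = nsq a * nsq b"
proof -
  have "nsq (vt a b) = (\<Sum>p\<in>UNIV \<times> UNIV. (\<lambda>i j. (cmod (a i * b j))\<^sup>2) (fst p) (snd p))"
    unfolding nsq_def vt_def by (intro sum.cong) (auto simp: case_prod_beta)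
  also have "\<dots> = (\<Sum>i\<in>UNIV. \<Sum>j\<in>UNIV. (cmod (a i * b j))\<^sup>2)"
    by (simp add: sum.cartesian_product case_prod_beta)
  also have "\<dots> = nsq a * nsq b"
    unfolding nsq_def by (simp add: sum_product norm_mult power_mult_distrib)
  finally show ?thesis .
qed

lemma sum_set_nth:
  assumes "distinct xs"
  shows "(\<Sum>x\<in>set xs. g x) = (\<Sum>m<length xs. g (xs ! m))"
  using assms by (simp add: sum.distinct_set_conv_list sum.list_conv_set_nth atLeast0LessThan)

lemma sep_from_rep:
  fixes \<rho> :: "('a::finite \<times> 'b::finite) cmat" and S :: "'x set"
    and A :: "'x \<Rightarrow> 'a \<Rightarrow> complex" and B :: "'x \<Rightarrow> 'b \<Rightarrow> complex"
  assumes fin: "finite S" and cpos: "\<forall>x\<in>S. 0 \<le> c x"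
    and rep: "\<And>v w. \<rho> v w = (\<Sum>x\<in>S. of_real (c x) * (vt (A x) (B x) v * cnj (vt (A x) (B x) w)))"
    and tr: "trace \<rho> = 1"
  shows "separable \<rho>"
proof -
  obtain xs where xs: "set xs = S" "distinct xs" using finite_distinct_list[OF fin] by blast
  define n where "n = length xs"
  define p where "p m = c (xs ! m) * nsq (A (xs ! m)) * nsq (B (xs ! m))" for m
  define AA where "AA m = dm (A (xs ! m))" for m
  define BB where "BB m = dm (B (xs ! m))" for m
  have key: "of_real (c x * nsq (A x) * nsq (B x)) * tensor (dm (A x)) (dm (B x)) v w
      = of_real (c x) * (vt (A x) (B x) v * cnj (vt (A x) (B x) w))" for x v w
  proof -
    obtain i j where v: "v = (i, j)" by (cases v)
    obtain i' j' where w: "w = (i', j')" by (cases w)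
    have "of_real (c x * nsq (A x) * nsq (B x)) * tensor (dm (A x)) (dm (B x)) v w
       = of_real (c x) * ((of_real (nsq (A x)) * dm (A x) i i') * (of_real (nsq (B x)) * dm (B x) j j'))"
      unfolding v w tensor_def by (simp add: mult_ac)
    also have "\<dots> = of_real (c x) * (vt (A x) (B x) v * cnj (vt (A x) (B x) w))"
      unfolding dm_eq v w vt_def by (simp add: mult_ac)
    finally show ?thesis .
  qed
  have "\<rho> = (\<lambda>v w. \<Sum>m<n. of_real (p m) * tensor (AA m) (BB m) v w)"
  proof (intro ext)
    fix v w
    show "\<rho> v w = (\<Sum>m<n. of_real (p m) * tensor (AA m) (BB m) v w)"
      unfolding rep xs(1)[symmetric] sum_set_nth[OF xs(2)] n_def p_def AA_def BB_def key ..
  qed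
  moreover have "(\<Sum>m<n. p m) = 1"
  proof -
    have "trace \<rho> = (\<Sum>x\<in>S. of_real (c x) * (\<Sum>v\<in>UNIV. vt (A x) (B x) v * cnj (vt (A x) (B x) v)))"
      unfolding trace_def rep by (simp add: sum.swap[of _ UNIV] sum_distrib_left)
    also have "\<dots> = (\<Sum>x\<in>S. of_real (c x * nsq (A x) * nsq (B x)))"
    proof (intro sum.cong refl)
      fix x
      have "(\<Sum>v\<in>UNIV. vt (A x) (B x) v * cnj (vt (A x) (B x) v)) = of_real (nsq (vt (A x) (B x)))"
        unfolding complex_mult_cnj_cmod nsq_def of_real_sum ..
      thus "of_real (c x) * (\<Sum>v\<in>UNIV. vt (A x) (B x) v * cnj (vt (A x) (B x) v)) = of_real (c x * nsq (A x) * nsq (B x))"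
        by (simp add: nsq_vt)
    qed
    also have "\<dots> = of_real (\<Sum>m<n. p m)"
      unfolding of_real_sum xs(1)[symmetric] sum_set_nth[OF xs(2)] n_def p_def ..
    finally have "(of_real (\<Sum>m<n. p m) :: complex) = of_real 1" using tr by simp
    thus ?thesis by (simp only: of_real_eq_iff)
  qed
  moreover have "\<forall>m<n. 0 \<le> p m \<and> density_matrix (AA m) \<and> density_matrix (BB m)"
  proof (intro allI impI conjI)
    fix m assume "m < n"
    hence "xs ! m \<in> S" using xs n_def by auto
    thus "0 \<le> p m" using cpos unfolding p_def by (simp add: nsq_nonneg)
  qed (simp_all add: AA_def BB_def dm_density)
  ultimately show ?thesis unfolding separable_def by blast
qed




lemma sum_pair_UNIV: "(\<Sum>v\<in>(UNIV::('a::finite \<times> 'b::finite) set). f v) = (\<Sum>i\<in>UNIV. \<Sum>j\<in>UNIV. f (i, j))"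
proof -
  have "(\<Sum>v\<in>(UNIV::('a \<times> 'b) set). f v) = (\<Sum>v\<in>UNIV \<times> UNIV. f v)" by simp
  also have "\<dots> = (\<Sum>i\<in>UNIV. \<Sum>j\<in>UNIV. f (i, j))" by (simp add: sum.cartesian_product)
  finally show ?thesis .
qed

lemma sum_if_out: "(\<Sum>j\<in>A. if P then f j else 0) = (if P then (\<Sum>j\<in>A. f j) else 0)"
  by auto

lemma quad_expand:
  fixes M :: "'a::finite cmat"
  shows "(\<Sum>i\<in>UNIV. \<Sum>j\<in>UNIV. cnj (1 + (if i = v then \<alpha> else 0)) * M i j * (1 + (if j = v then \<alpha> else 0)))
    = (\<Sum>i\<in>UNIV. \<Sum>j\<in>UNIV. M i j) + cnj \<alpha> * (\<Sum>j\<in>UNIV. M v j) + \<alpha> * (\<Sum>i\<in>UNIV. M i v)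
      + cnj \<alpha> * \<alpha> * M v v"
proof -
  have pt: "cnj (1 + (if i = v then \<alpha> else 0)) * M i j * (1 + (if j = v then \<alpha> else 0))
     = M i j + (if i = v then cnj \<alpha> * M i j else 0) + (if j = v then \<alpha> * M i j else 0)
       + (if i = v then (if j = v then cnj \<alpha> * \<alpha> * M i j else 0) else 0)" for i j
    by (cases "i = v"; cases "j = v") (simp_all add: algebra_simps)
  show ?thesis unfolding pt sum.distrib
    by (simp add: sum_distrib_left sum_if_out)
qed

lemma psd_quad: "psd M \<Longrightarrow> 0 \<le> Re (\<Sum>i\<in>UNIV. \<Sum>j\<in>UNIV. cnj (x i) * M i j * x j)"
  unfolding psd_def by blast

lemma psd_diag: "psd M \<Longrightarrow> 0 \<le> Re (M v v)"
proof -
  assume "psd M"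
  hence "0 \<le> Re (\<Sum>i\<in>UNIV. \<Sum>j\<in>UNIV. cnj (if i = v then 1 else 0) * M i j * (if j = v then 1 else 0))"
    by (rule psd_quad)
  moreover have "(\<Sum>i\<in>UNIV. \<Sum>j\<in>UNIV. cnj (if i = v then 1 else 0) * M i j * (if j = v then 1 else 0))
     = (\<Sum>i\<in>UNIV. \<Sum>j\<in>UNIV. if i = v then (if j = v then M i j else 0) else 0)"
    by (intro sum.cong) auto
  ultimately show ?thesis by (simp add: sum_if_out)
qed

lemma psd_rowsum_zero:
  fixes M :: "'a::finite cmat"
  assumes psd: "psd M" and s0: "(\<Sum>i\<in>UNIV. \<Sum>j\<in>UNIV. M i j) = 0"
  shows "(\<Sum>j\<in>UNIV. M v j) = 0"
proof (rule ccontr)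
  define z where "z = (\<Sum>j\<in>UNIV. M v j)"
  assume "(\<Sum>j\<in>UNIV. M v j) \<noteq> 0"
  hence zn: "z \<noteq> 0" unfolding z_def .
  define c where "c = Re (M v v)"
  have c0: "0 \<le> c" unfolding c_def using psd_diag[OF psd] .
  define d where "d = c + 1"
  have d0: "0 < d" using c0 unfolding d_def by simp
  define n where "n = (cmod z)\<^sup>2"
  have n0: "0 < n" using zn unfolding n_def by simp
  have herm: "M i j = cnj (M j i)" for i j using psd unfolding psd_def hermitian_def by blast
  have col: "(\<Sum>i\<in>UNIV. M i v) = cnj z"
    unfolding z_def cnj_sum by (intro sum.cong refl) (use herm in blast)
  define \<alpha> where "\<alpha> = - z / of_real d"
  have "0 \<le> Re (\<Sum>i\<in>UNIV. \<Sum>j\<in>UNIV. cnj (1 + (if i = v then \<alpha> else 0)) * M i j * (1 + (if j = v then \<alpha> else 0)))"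
    using psd by (rule psd_quad)
  also have "\<dots> = Re (cnj \<alpha> * z + \<alpha> * cnj z + cnj \<alpha> * \<alpha> * M v v)"
    unfolding quad_expand s0 col z_def by simp
  also have "cnj \<alpha> * z = - of_real (n / d)"
    unfolding \<alpha>_def n_def apply (simp add: mult.commute) by (metis complex_norm_square of_real_power)
  also have "\<alpha> * cnj z = - of_real (n / d)"
    unfolding \<alpha>_def n_def apply simp by (metis complex_norm_square of_real_power)
  also have "cnj \<alpha> * \<alpha> = of_real (n / d\<^sup>2)"
    unfolding \<alpha>_def n_def apply (simp add: power2_eq_square mult.commute) by (metis complex_norm_square of_real_power power2_eq_square)
  finally have "0 \<le> - 2 * (n / d) + (n / d\<^sup>2) * c"
    unfolding c_def by simp
  hence "0 \<le> (- 2 * d + c) * n / d\<^sup>2" using d0 by (simp add: field_simps power2_eq_square)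
  moreover have "(- 2 * d + c) * n / d\<^sup>2 < 0"
    using d0 n0 c0 unfolding d_def by (intro divide_neg_pos mult_neg_pos) auto
  ultimately show False by simp
qed

lemma herm_total_real:
  fixes M :: "'a::finite cmat"
  assumes "hermitian M"
  shows "(\<Sum>i\<in>UNIV. \<Sum>j\<in>UNIV. M i j) = of_real (Re (\<Sum>i\<in>UNIV. \<Sum>j\<in>UNIV. M i j))"
proof -
  have "cnj (\<Sum>i\<in>UNIV. \<Sum>j\<in>UNIV. M i j) = (\<Sum>i\<in>UNIV. \<Sum>j\<in>UNIV. M j i)"
    unfolding cnj_sum using assms unfolding hermitian_def
    by (metis (no_types, lifting) complex_cnj_cnj sum.cong)
  also have "\<dots> = (\<Sum>i\<in>UNIV. \<Sum>j\<in>UNIV. M i j)" by (rule sum.swap)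
  finally have "Im (\<Sum>i\<in>UNIV. \<Sum>j\<in>UNIV. M i j) = 0"
    by (metis Reals_cnj_iff complex_is_Real_iff)
  thus ?thesis by (simp add: complex_eq_iff)
qed

lemma psd_total_nonneg: "psd M \<Longrightarrow> 0 \<le> Re (\<Sum>i\<in>UNIV. \<Sum>j\<in>UNIV. M i j)"
  using psd_quad[of M "\<lambda>_. 1"] by simp

lemma tensor_total:
  "(\<Sum>v\<in>UNIV. \<Sum>w\<in>UNIV. tensor (A::'a::finite cmat) (B::'b::finite cmat) v w)
    = (\<Sum>i\<in>UNIV. \<Sum>i'\<in>UNIV. A i i') * (\<Sum>j\<in>UNIV. \<Sum>j'\<in>UNIV. B j j')"
proof -
  have "(\<Sum>v\<in>UNIV. \<Sum>w\<in>UNIV. tensor A B v w) = (\<Sum>i\<in>UNIV. \<Sum>j\<in>UNIV. \<Sum>i'\<in>UNIV. \<Sum>j'\<in>UNIV. A i i' * B j j')"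
    unfolding sum_pair_UNIV tensor_def by simp
  also have "\<dots> = (\<Sum>i\<in>UNIV. \<Sum>i'\<in>UNIV. \<Sum>j\<in>UNIV. \<Sum>j'\<in>UNIV. A i i' * B j j')"
    by (intro sum.cong refl) (rule sum.swap)
  also have "\<dots> = (\<Sum>i\<in>UNIV. \<Sum>i'\<in>UNIV. A i i' * (\<Sum>j\<in>UNIV. \<Sum>j'\<in>UNIV. B j j'))"
    by (simp only: sum_distrib_left)
  also have "\<dots> = (\<Sum>i\<in>UNIV. \<Sum>i'\<in>UNIV. A i i') * (\<Sum>j\<in>UNIV. \<Sum>j'\<in>UNIV. B j j')"
    by (simp only: sum_distrib_right)
  finally show ?thesis .
qed

lemma sep_pt_rowsum:
  fixes \<rho> :: "('a::finite \<times> 'b::finite) cmat"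
  assumes sep: "separable \<rho>" and s0: "(\<Sum>v\<in>UNIV. \<Sum>w\<in>UNIV. \<rho> v w) = 0"
  shows "(\<Sum>i'\<in>UNIV. \<Sum>j'\<in>UNIV. \<rho> (a, j') (i', b)) = 0"
proof -
  obtain n :: nat and p :: "nat \<Rightarrow> real" and A :: "nat \<Rightarrow> 'a cmat" and B :: "nat \<Rightarrow> 'b cmat" where
    props: "\<forall>m<n. 0 \<le> p m \<and> density_matrix (A m) \<and> density_matrix (B m)"
    and "sum p {..<n} = 1"
    and rho: "\<rho> = (\<lambda>v w. \<Sum>m<n. of_real (p m) * tensor (A m) (B m) v w)"
    using sep unfolding separable_def by blast
  define sA where "sA m = Re (\<Sum>i\<in>UNIV. \<Sum>j\<in>UNIV. A m i j)" for m
  define sB where "sB m = Re (\<Sum>i\<in>UNIV. \<Sum>j\<in>UNIV. B m i j)" for m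
  have psdA: "psd (A m)" and psdB: "psd (B m)" if "m < n" for m
    using props that unfolding density_matrix_def by auto
  have eA: "(\<Sum>i\<in>UNIV. \<Sum>j\<in>UNIV. A m i j) = of_real (sA m)" if "m < n" for m
    unfolding sA_def using herm_total_real psdA[OF that] unfolding psd_def by blast
  have eB: "(\<Sum>i\<in>UNIV. \<Sum>j\<in>UNIV. B m i j) = of_real (sB m)" if "m < n" for m
    unfolding sB_def using herm_total_real psdB[OF that] unfolding psd_def by blast
  have nn: "0 \<le> p m * sA m * sB m" if "m < n" for m
    using props that psd_total_nonneg[OF psdA[OF that]] psd_total_nonneg[OF psdB[OF that]]
    unfolding sA_def sB_def by simp
  have "0 = (\<Sum>v\<in>UNIV. \<Sum>w\<in>UNIV. \<Sum>m<n. of_real (p m) * tensor (A m) (B m) v w)"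
    using s0 unfolding rho by simp
  also have "\<dots> = (\<Sum>m<n. of_real (p m) * (\<Sum>v\<in>UNIV. \<Sum>w\<in>UNIV. tensor (A m) (B m) v w))"
    by (simp add: sum_distrib_left sum.swap[of _ "{..<n}"])
  also have "\<dots> = (\<Sum>m<n. of_real (p m * sA m * sB m))"
    by (intro sum.cong refl) (simp add: tensor_total eA eB)
  finally have "(\<Sum>m<n. p m * sA m * sB m) = 0"
    by (metis of_real_eq_0_iff of_real_sum)
  hence z: "p m * sA m * sB m = 0" if "m < n" for m
    using nn that by (subst (asm) sum_nonneg_eq_0_iff) auto
  have term0: "of_real (p m) * ((\<Sum>i'\<in>UNIV. A m a i') * (\<Sum>j'\<in>UNIV. B m j' b)) = 0" if "m < n" for m
  proof -
    have "p m = 0 \<or> sA m = 0 \<or> sB m = 0" using z[OF that] by simp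
    moreover have "(\<Sum>i'\<in>UNIV. A m a i') = 0" if "sA m = 0"
      using psd_rowsum_zero[OF psdA[OF \<open>m < n\<close>]] eA[OF \<open>m < n\<close>] that by simp
    moreover have "(\<Sum>j'\<in>UNIV. B m j' b) = 0" if "sB m = 0"
    proof -
      have "(\<Sum>j'\<in>UNIV. B m b j') = 0"
        using psd_rowsum_zero[OF psdB[OF \<open>m < n\<close>]] eB[OF \<open>m < n\<close>] that by simp
      moreover have "(\<Sum>j'\<in>UNIV. B m j' b) = cnj (\<Sum>j'\<in>UNIV. B m b j')"
        using psdB[OF \<open>m < n\<close>] unfolding psd_def hermitian_def cnj_sum by (metis (no_types, lifting) sum.cong)
      ultimately show ?thesis by simp
    qed
    ultimately show ?thesis by auto
  qed
  have "(\<Sum>i'\<in>UNIV. \<Sum>j'\<in>UNIV. \<rho> (a, j') (i', b))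
     = (\<Sum>m<n. of_real (p m) * ((\<Sum>i'\<in>UNIV. A m a i') * (\<Sum>j'\<in>UNIV. B m j' b)))"
  proof -
    have "(\<Sum>i'\<in>UNIV. \<Sum>j'\<in>UNIV. \<rho> (a, j') (i', b))
      = (\<Sum>i'\<in>UNIV. \<Sum>j'\<in>UNIV. \<Sum>m<n. of_real (p m) * (A m a i' * B m j' b))"
      unfolding rho tensor_def by simp
    also have "\<dots> = (\<Sum>i'\<in>UNIV. \<Sum>m<n. \<Sum>j'\<in>UNIV. of_real (p m) * (A m a i' * B m j' b))"
      by (intro sum.cong refl) (rule sum.swap)
    also have "\<dots> = (\<Sum>m<n. \<Sum>i'\<in>UNIV. \<Sum>j'\<in>UNIV. of_real (p m) * (A m a i' * B m j' b))"
      by (rule sum.swap)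
    also have "\<dots> = (\<Sum>m<n. of_real (p m) * ((\<Sum>i'\<in>UNIV. A m a i') * (\<Sum>j'\<in>UNIV. B m j' b)))"
      by (intro sum.cong refl) (unfold sum_distrib_right, unfold sum_distrib_left, simp add: mult_ac)
    finally show ?thesis .
  qed
  also have "\<dots> = 0" using term0 by (intro sum.neutral) auto
  finally show ?thesis .
qed




lemma sum_indicator_card:
  "(\<Sum>w\<in>(UNIV::'v::finite set). if P w then (1::complex) else 0) = of_nat (card {w. P w})"
proof -
  have "(\<Sum>w\<in>(UNIV::'v set). if P w then (1::complex) else 0) = (\<Sum>w\<in>{w\<in>UNIV. P w}. 1)"
    by (rule sum.inter_filter[symmetric]) simp
  thus ?thesis by simp
qed

lemma pt_rowsum_laplacian:
  fixes E :: "'a::finite \<times> 'b::finite \<Rightarrow> 'a \<times> 'b \<Rightarrow> bool"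
  shows "(\<Sum>i'\<in>UNIV. \<Sum>j'\<in>UNIV. laplacian E (a, j') (i', b))
     = of_nat (degree E (a, b)) - of_nat (degree (partial_transpose_graph E) (a, b))"
proof -
  have d: "(\<Sum>i'\<in>UNIV. \<Sum>j'\<in>UNIV. deg_mat E (a, j') (i', b)) = of_nat (degree E (a, b))"
  proof -
    have "(\<Sum>i'\<in>UNIV. \<Sum>j'\<in>UNIV. deg_mat E (a, j') (i', b))
       = (\<Sum>i'\<in>UNIV. \<Sum>j'\<in>UNIV. if i' = a then (if j' = b then of_nat (degree E (a, b)) else 0) else 0)"
      unfolding deg_mat_def by (intro sum.cong refl) auto
    thus ?thesis by (simp add: sum_if_out)
  qed
  have e: "(\<Sum>i'\<in>UNIV. \<Sum>j'\<in>UNIV. adj_mat E (a, j') (i', b))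
      = of_nat (degree (partial_transpose_graph E) (a, b))"
  proof -
    have "(\<Sum>i'\<in>UNIV. \<Sum>j'\<in>UNIV. adj_mat E (a, j') (i', b))
       = (\<Sum>w\<in>UNIV. if partial_transpose_graph E (a, b) w then 1 else 0)"
      unfolding sum_pair_UNIV adj_mat_def partial_transpose_graph_def by simp
    thus ?thesis unfolding sum_indicator_card degree_def .
  qed
  show ?thesis unfolding laplacian_def sum_subtractf d e ..
qed

lemma laplacian_total_zero:
  fixes E :: "'v::finite \<Rightarrow> 'v \<Rightarrow> bool"
  shows "(\<Sum>v\<in>UNIV. \<Sum>w\<in>UNIV. laplacian E v w) = 0"
proof -
  have "(\<Sum>w\<in>UNIV. laplacian E v w) = 0" for v
  proof -
    have "(\<Sum>w\<in>UNIV. deg_mat E v w) = of_nat (degree E v)"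
      unfolding deg_mat_def by simp
    moreover have "(\<Sum>w\<in>UNIV. adj_mat E v w) = of_nat (degree E v)"
      unfolding adj_mat_def degree_def sum_indicator_card ..
    ultimately show ?thesis unfolding laplacian_def sum_subtractf by simp
  qed
  thus ?thesis by simp
qed

lemma necessity:
  fixes E :: "'a::finite \<times> 'b::finite \<Rightarrow> 'a \<times> 'b \<Rightarrow> bool"
  assumes sep: "separable (density_of_graph E)" and ne: "num_edges E \<noteq> 0"
  shows "deg_mat E = deg_mat (partial_transpose_graph E)"
proof -
  define c :: complex where "c = of_nat (2 * num_edges E)"
  have c0: "c \<noteq> 0" using ne unfolding c_def by simp
  have "(\<Sum>v\<in>UNIV. \<Sum>w\<in>UNIV. density_of_graph E v w) = (\<Sum>v\<in>UNIV. \<Sum>w\<in>UNIV. laplacian E v w) / c"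
    unfolding density_of_graph_def c_def by (simp add: sum_divide_distrib)
  hence "(\<Sum>v\<in>UNIV. \<Sum>w\<in>UNIV. density_of_graph E v w) = 0" using laplacian_total_zero[of E] by simp
  from sep_pt_rowsum[OF sep this]
  have z: "(\<Sum>i'\<in>UNIV. \<Sum>j'\<in>UNIV. density_of_graph E (a, j') (i', b)) = 0" for a b .
  have "degree E (a, b) = degree (partial_transpose_graph E) (a, b)" for a b
  proof -
    have "(\<Sum>i'\<in>UNIV. \<Sum>j'\<in>UNIV. laplacian E (a, j') (i', b)) / c = 0"
      using z[of a b] unfolding density_of_graph_def c_def by (simp add: sum_divide_distrib)
    hence "(\<Sum>i'\<in>UNIV. \<Sum>j'\<in>UNIV. laplacian E (a, j') (i', b)) = 0" using c0 by simp
    hence "(of_nat (degree E (a, b)) :: complex) = of_nat (degree (partial_transpose_graph E) (a, b))"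
      unfolding pt_rowsum_laplacian by simp
    thus ?thesis by (simp only: of_nat_eq_iff)
  qed
  thus ?thesis unfolding deg_mat_def by (intro ext) auto
qed




definition mt :: "('v \<Rightarrow> 'v \<Rightarrow> bool) \<Rightarrow> 'v \<Rightarrow> 'v" where
  "mt E v = (THE w. E v w)"

context
  fixes E :: "'v::finite \<Rightarrow> 'v \<Rightarrow> bool"
  assumes pm: "perfect_matching E"
begin

lemma pm_iff: "E v w \<longleftrightarrow> w = mt E v"
proof -
  have ex1: "\<exists>!w. E v w" using pm unfolding perfect_matching_def by blast
  hence "E v (mt E v)" unfolding mt_def by (rule theI')
  thus ?thesis using ex1 by blast
qed

lemma pm_inv[simp]: "mt E (mt E v) = v"
proof -
  have "E v (mt E v)" using pm_iff by simp
  hence "E (mt E v) v" using pm unfolding perfect_matching_def simple_graph_def by blast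
  thus ?thesis using pm_iff by simp
qed

lemma pm_neq: "mt E v \<noteq> v"
proof
  assume "mt E v = v"
  hence "E v v" using pm_iff by simp
  thus False using pm unfolding perfect_matching_def simple_graph_def by blast
qed

lemma pm_eq_iff: "x = mt E v \<longleftrightarrow> v = mt E x"
  by (metis pm_inv)

lemma pm_degree: "degree E v = 1"
proof -
  have "{w. E v w} = {mt E v}" using pm_iff by auto
  thus ?thesis unfolding degree_def by simp
qed

lemma pm_lap: "laplacian E x y = (if x = y then 1 else 0) - (if y = mt E x then 1 else 0)"
  unfolding laplacian_def deg_mat_def adj_mat_def pm_degree using pm_iff by simp

lemma pm_num_edges: "2 * num_edges E = card (UNIV :: 'v set)"
proof -
  define Ed where "Ed = {{v, w} | v w. E v w}"
  have Ed: "Ed = range (\<lambda>v. {v, mt E v})" unfolding Ed_def using pm_iff by auto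
  have U: "\<Union>Ed = UNIV" unfolding Ed by auto
  have disj: "pairwise disjnt Ed"
    unfolding Ed pairwise_def disjnt_def
    by (auto simp: pm_eq_iff)
  have c2: "card e = 2" if "e \<in> Ed" for e
    using that pm_neq unfolding Ed by (auto simp: card_insert_if) (metis pm_neq)
  have "card (UNIV :: 'v set) = card (\<Union>Ed)" unfolding U ..
  also have "\<dots> = sum card Ed" by (rule card_Union_disjoint[OF disj]) simp
  also have "\<dots> = sum (\<lambda>_. 2) Ed" using c2 by simp
  also have "\<dots> = 2 * card Ed" by simp
  finally show ?thesis unfolding num_edges_def Ed_def by simp
qed

lemma pm_trace: "trace (density_of_graph E) = 1"
proof -
  have "trace (laplacian E) = of_nat (card (UNIV :: 'v set))"
    unfolding trace_def pm_lap using pm_neq by (simp add: eq_commute[of _ "mt E _"])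
  thus ?thesis
    unfolding trace_def density_of_graph_def pm_num_edges
    by (simp add: sum_divide_distrib[symmetric] trace_def)
qed

end




lemma flip_sym:
  fixes E :: "'a::finite \<times> bool \<Rightarrow> 'a \<times> bool \<Rightarrow> bool"
  assumes pm: "perfect_matching E"
    and deg: "deg_mat E = deg_mat (partial_transpose_graph E)"
  shows "snd (mt E (a, b)) = b \<longleftrightarrow> snd (mt E (a, \<not> b)) \<noteq> b"
proof -
  have "deg_mat E (a, b) (a, b) = deg_mat (partial_transpose_graph E) (a, b) (a, b)" using deg by simp
  hence "degree (partial_transpose_graph E) (a, b) = 1"
    unfolding deg_mat_def pm_degree[OF pm] by simp
  moreover have S: "{w. partial_transpose_graph E (a, b) w} = {(i', j'). (i', b) = mt E (a, j')}"
    unfolding partial_transpose_graph_def using pm_iff[OF pm] by auto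
  ultimately have c1: "card {(i', j'). (i', b) = mt E (a, j')} = 1" unfolding degree_def by simp
  show ?thesis
  proof (rule ccontr)
    assume "\<not> ?thesis"
    hence "(snd (mt E (a, b)) = b \<and> snd (mt E (a, \<not> b)) = b) \<or> (snd (mt E (a, b)) \<noteq> b \<and> snd (mt E (a, \<not> b)) \<noteq> b)"
      by blast
    thus False
    proof
      assume h: "snd (mt E (a, b)) = b \<and> snd (mt E (a, \<not> b)) = b"
      have "{(fst (mt E (a, b)), b), (fst (mt E (a, \<not> b)), \<not> b)} \<subseteq> {(i', j'). (i', b) = mt E (a, j')}"
        using h by (auto simp: prod_eq_iff)
      hence "card {(fst (mt E (a, b)), b), (fst (mt E (a, \<not> b)), \<not> b)} \<le> 1"
        using c1 by (metis card_mono finite)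
      thus False by simp
    next
      assume h: "snd (mt E (a, b)) \<noteq> b \<and> snd (mt E (a, \<not> b)) \<noteq> b"
      have "{(i', j'). (i', b) = mt E (a, j')} = {}"
      proof (rule equals0I)
        fix x assume "x \<in> {(i', j'). (i', b) = mt E (a, j')}"
        then obtain i' j' where "x = (i', j')" "(i', b) = mt E (a, j')" by auto
        thus False using h by (cases j'; cases b) (auto simp: prod_eq_iff)
      qed
      thus False using c1 by simp
    qed
  qed
qed




definition om :: "nat \<Rightarrow> complex" where "om N = cis (2 * pi / real N)"

lemma om_pow: "om N ^ t = cis (2 * pi * real t / real N)"
  unfolding om_def DeMoivre by (simp add: field_simps)

lemma om_pow_N: "N > 0 \<Longrightarrow> om N ^ N = 1"
  unfolding om_pow by simp

lemma om_cnj_mult: "cnj (om N) * om N = 1"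
  unfolding om_def by (simp add: cis_cnj cis_mult)

lemma om_pow_cnj_mult: "cnj (om N ^ t) * om N ^ t = 1"
  by (metis om_cnj_mult complex_cnj_power power_mult_distrib power_one)

lemma om_pow_inj: "N > 0 \<Longrightarrow> t < N \<Longrightarrow> t' < N \<Longrightarrow> om N ^ t = om N ^ t' \<Longrightarrow> t = t'"
  using bij_betw_roots_unity[of N] unfolding bij_betw_def inj_on_def om_pow by auto

lemma orth:
  assumes N: "N > 0" and t: "t < N" and t': "t' < N"
  shows "(\<Sum>s<N. om N ^ (s * t) * cnj (om N ^ (s * t'))) = (if t = t' then of_nat N else 0)"
proof -
  define u where "u = om N ^ t * cnj (om N ^ t')"
  have eq: "om N ^ (s * t) * cnj (om N ^ (s * t')) = u ^ s" for s
    unfolding u_def by (simp add: power_mult power_mult_distrib mult.commute[of s])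
  show ?thesis
  proof (cases "t = t'")
    case True
    hence "u = 1" unfolding u_def using om_pow_cnj_mult[of N t'] by (simp add: mult.commute)
    thus ?thesis unfolding eq using True by simp
  next
    case False
    have a: "(om N ^ t) ^ N = (om N ^ N) ^ t" by (metis power_mult mult.commute)
    have b: "(cnj (om N ^ t')) ^ N = cnj ((om N ^ N) ^ t')" by (metis complex_cnj_power power_mult mult.commute)
    have uN: "u ^ N = 1"
      unfolding u_def power_mult_distrib a b om_pow_N[OF N] by simp
    have "u \<noteq> 1"
    proof
      assume "u = 1"
      have "om N ^ t = om N ^ t * (cnj (om N ^ t') * om N ^ t')" unfolding om_pow_cnj_mult by simp
      also have "\<dots> = u * om N ^ t'" unfolding u_def by (simp only: mult.assoc)
      finally have "om N ^ t = om N ^ t'" using \<open>u = 1\<close> by simp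
      thus False using om_pow_inj[OF N t t'] False by simp
    qed
    hence "(\<Sum>s<N. u ^ s) = (u ^ N - 1) / (u - 1)" by (rule geometric_sum)
    also have "\<dots> = 0" unfolding uN by simp
    finally show ?thesis unfolding eq using False by simp
  qed
qed

lemma parseval:
  fixes \<psi> :: "nat \<Rightarrow> complex" and \<phi> :: "nat \<Rightarrow> complex"
  assumes N: "N > 0"
  shows "(\<Sum>s<N. (\<Sum>t<N. om N ^ (s * t) * \<psi> t) * cnj (\<Sum>t<N. om N ^ (s * t) * \<phi> t))
       = of_nat N * (\<Sum>t<N. \<psi> t * cnj (\<phi> t))"
proof -
  have pt: "(\<Sum>t<N. om N ^ (s * t) * \<psi> t) * cnj (\<Sum>t<N. om N ^ (s * t) * \<phi> t)
      = (\<Sum>t<N. \<Sum>t'<N. (om N ^ (s * t) * cnj (om N ^ (s * t'))) * (\<psi> t * cnj (\<phi> t')))" for s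
    unfolding cnj_sum sum_product by (intro sum.cong refl) (simp add: mult_ac)
  have "(\<Sum>s<N. (\<Sum>t<N. om N ^ (s * t) * \<psi> t) * cnj (\<Sum>t<N. om N ^ (s * t) * \<phi> t))
      = (\<Sum>s<N. \<Sum>t<N. \<Sum>t'<N. (om N ^ (s * t) * cnj (om N ^ (s * t'))) * (\<psi> t * cnj (\<phi> t')))"
    unfolding pt ..
  also have "\<dots> = (\<Sum>t<N. \<Sum>s<N. \<Sum>t'<N. (om N ^ (s * t) * cnj (om N ^ (s * t'))) * (\<psi> t * cnj (\<phi> t')))"
    by (rule sum.swap)
  also have "\<dots> = (\<Sum>t<N. \<Sum>t'<N. \<Sum>s<N. (om N ^ (s * t) * cnj (om N ^ (s * t'))) * (\<psi> t * cnj (\<phi> t')))"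
    by (rule sum.cong[OF refl], rule sum.swap)
  also have "\<dots> = (\<Sum>t<N. \<Sum>t'<N. (if t = t' then of_nat N else 0) * (\<psi> t * cnj (\<phi> t')))"
    by (rule sum.cong[OF refl], rule sum.cong[OF refl]) (simp only: sum_distrib_right[symmetric] orth[OF N] lessThan_iff)
  also have "\<dots> = (\<Sum>t<N. of_nat N * (\<psi> t * cnj (\<phi> t)))"
  proof (rule sum.cong[OF refl])
    fix t assume "t \<in> {..<N}"
    have "(\<Sum>t'<N. (if t = t' then of_nat N else 0) * (\<psi> t * cnj (\<phi> t')))
       = (\<Sum>t'<N. if t = t' then of_nat N * (\<psi> t * cnj (\<phi> t')) else 0)"
      by (rule sum.cong[OF refl]) simp
    also have "\<dots> = of_nat N * (\<psi> t * cnj (\<phi> t))" using \<open>t \<in> {..<N}\<close> by simp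
    finally show "(\<Sum>t'<N. (if t = t' then of_nat N else 0) * (\<psi> t * cnj (\<phi> t'))) = of_nat N * (\<psi> t * cnj (\<phi> t))" .
  qed
  also have "\<dots> = of_nat N * (\<Sum>t<N. \<psi> t * cnj (\<phi> t))"
    by (simp add: sum_distrib_left)
  finally show ?thesis .
qed




definition ind :: "'v \<Rightarrow> 'v \<Rightarrow> complex" where
  "ind c x = (if x = c then 1 else 0)"

definition psi :: "('v \<Rightarrow> 'v \<Rightarrow> bool) \<Rightarrow> 'v \<Rightarrow> 'v \<Rightarrow> complex" where
  "psi E v x = ind v x - ind (mt E v) x"

lemma cnj_ind[simp]: "cnj (ind c x) = ind c x"
  unfolding ind_def by simp

lemma sum_ind2: "(\<Sum>v\<in>(UNIV::'v::finite set). ind a v * ind b v) = (if a = b then 1 else 0)"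
proof -
  have "ind a v * ind b v = (if v = a then (if a = b then 1 else 0) else 0)" for v
    unfolding ind_def by simp
  thus ?thesis by simp
qed

context
  fixes E :: "'v::finite \<Rightarrow> 'v \<Rightarrow> bool"
  assumes pm: "perfect_matching E"
begin

lemma ind_m: "ind (mt E v) x = ind (mt E x) v"
proof -
  have e: "(x = mt E v) = (v = mt E x)" by (rule pm_eq_iff[OF pm])
  show ?thesis unfolding ind_def e ..
qed

lemma ind_sym: "ind v x = ind x v"
  unfolding ind_def by auto

lemma psi_alt: "psi E v x = ind x v - ind (mt E x) v"
  unfolding psi_def ind_m[of v x] ind_sym[of v x] ..

lemma L_half: "laplacian E x y = (1/2) * (\<Sum>v\<in>UNIV. psi E v x * cnj (psi E v y))"
proof -
  have "(\<Sum>v\<in>UNIV. psi E v x * cnj (psi E v y))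
     = (\<Sum>v\<in>UNIV. ind x v * ind y v) - (\<Sum>v\<in>UNIV. ind x v * ind (mt E y) v)
       - (\<Sum>v\<in>UNIV. ind (mt E x) v * ind y v) + (\<Sum>v\<in>UNIV. ind (mt E x) v * ind (mt E y) v)"
    unfolding psi_alt by (simp add: algebra_simps sum_subtractf sum.distrib)
  also have "\<dots> = 2 * ((if x = y then 1 else 0) - (if y = mt E x then 1 else 0))"
    unfolding sum_ind2 using pm_eq_iff[OF pm, of x y] pm_inv[OF pm] by (auto, metis pm_inv[OF pm])
  finally show ?thesis unfolding pm_lap[OF pm] by simp
qed

lemma psi_m: "psi E (mt E v) x = - psi E v x"
  unfolding psi_def pm_inv[OF pm] by simp

end


lemma psi_outer_m:
  fixes E :: "'v::finite \<Rightarrow> 'v \<Rightarrow> bool"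
  assumes pm: "perfect_matching E"
  shows "psi E (mt E v) x * cnj (psi E (mt E v) y) = psi E v x * cnj (psi E v y)"
  unfolding psi_m[OF pm] by simp

definition FF :: "('a \<times> bool \<Rightarrow> 'a \<times> bool \<Rightarrow> bool) \<Rightarrow> 'a set" where
  "FF E = {i. snd (mt E (i, False)) = True}"

definition tau :: "('a \<times> bool \<Rightarrow> 'a \<times> bool \<Rightarrow> bool) \<Rightarrow> 'a \<Rightarrow> 'a" where
  "tau E i = (if i \<in> FF E then fst (mt E (i, False)) else i)"

context
  fixes E :: "'a::finite \<times> bool \<Rightarrow> 'a \<times> bool \<Rightarrow> bool"
  assumes pm: "perfect_matching E"
    and deg: "deg_mat E = deg_mat (partial_transpose_graph E)"
begin

lemma mF: "i \<in> FF E \<Longrightarrow> mt E (i, False) = (tau E i, True)"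
  unfolding tau_def FF_def by (simp add: prod_eq_iff)

lemma tauF: "i \<in> FF E \<Longrightarrow> tau E i \<in> FF E"
proof -
  assume i: "i \<in> FF E"
  have "mt E (tau E i, True) = (i, False)" using mF[OF i] pm_inv[OF pm, of "(i, False)"] by simp
  hence "snd (mt E (tau E i, \<not> False)) = False" by simp
  hence "snd (mt E (tau E i, False)) \<noteq> False"
    using flip_sym[OF pm deg, of "tau E i" False] by simp
  thus ?thesis unfolding FF_def by simp
qed

lemma tau_inj: "inj (tau E)"
proof (rule injI)
  fix i j assume eq: "tau E i = tau E j"
  show "i = j"
  proof (cases "i \<in> FF E"; cases "j \<in> FF E")
    assume "i \<in> FF E" "j \<in> FF E"
    hence "mt E (i, False) = mt E (j, False)" using mF eq by simp
    hence "mt E (mt E (i, False)) = mt E (mt E (j, False))" by simp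
    thus "i = j" unfolding pm_inv[OF pm] by simp
  next
    assume "i \<in> FF E" "j \<notin> FF E"
    thus "i = j" using eq tauF[of i] unfolding tau_def by auto
  next
    assume "i \<notin> FF E" "j \<in> FF E"
    thus "i = j" using eq tauF[of j] unfolding tau_def by auto
  next
    assume "i \<notin> FF E" "j \<notin> FF E"
    thus "i = j" using eq unfolding tau_def by auto
  qed
qed

lemma tau_bijF: "bij_betw (tau E) (FF E) (FF E)"
proof -
  have "tau E ` FF E = FF E"
    by (rule endo_inj_surj) (use tauF tau_inj in \<open>auto simp: inj_on_def\<close>)
  thus ?thesis unfolding bij_betw_def using tau_inj by (simp add: inj_on_def inj_def)
qed

lemma tau_period: "\<exists>N>0. tau E ^^ N = id"
proof -
  have "bij (tau E)" using tau_inj finite_UNIV_inj_surj[of "tau E"] by (simp add: bij_def)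
  hence "permutation (tau E)" unfolding permutation by simp
  then obtain N where "tau E ^^ N = id" "N > 0" by (rule permutation_is_nilpotent)
  thus ?thesis by blast
qed

lemma split_sum:
  fixes g :: "'a \<times> bool \<Rightarrow> complex"
  assumes gm: "\<And>v. g (mt E v) = g v"
  shows "(\<Sum>v\<in>UNIV. g v) = (\<Sum>v\<in>{v. snd (mt E v) = snd v}. g v) + 2 * (\<Sum>i\<in>FF E. g (i, False))"
proof -
  define NF where "NF = {v. snd (mt E v) = snd v}"
  define F0 where "F0 = {v. snd (mt E v) \<noteq> snd v \<and> snd v = False}"
  define F1 where "F1 = {v. snd (mt E v) \<noteq> snd v \<and> snd v = True}"
  have U: "UNIV = NF \<union> (F0 \<union> F1)" unfolding NF_def F0_def F1_def by auto
  have "(\<Sum>v\<in>UNIV. g v) = (\<Sum>v\<in>NF. g v) + (\<Sum>v\<in>F0 \<union> F1. g v)"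
    unfolding U by (rule sum.union_disjoint) (auto simp: NF_def F0_def F1_def)
  also have "(\<Sum>v\<in>F0 \<union> F1. g v) = (\<Sum>v\<in>F0. g v) + (\<Sum>v\<in>F1. g v)"
    by (rule sum.union_disjoint) (auto simp: F0_def F1_def)
  also have "(\<Sum>v\<in>F1. g v) = (\<Sum>v\<in>F0. g v)"
  proof -
    have b: "bij_betw (mt E) F0 F1"
    proof (rule bij_betw_byWitness[where f' = "mt E"])
      show "\<forall>a\<in>F0. mt E (mt E a) = a" "\<forall>a\<in>F1. mt E (mt E a) = a" using pm_inv[OF pm] by auto
      show "mt E ` F0 \<subseteq> F1"
      proof
        fix w assume "w \<in> mt E ` F0"
        then obtain v where v: "v \<in> F0" "w = mt E v" by auto
        thus "w \<in> F1" unfolding F0_def F1_def using pm_inv[OF pm, of v] by auto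
      qed
      show "mt E ` F1 \<subseteq> F0"
      proof
        fix w assume "w \<in> mt E ` F1"
        then obtain v where v: "v \<in> F1" "w = mt E v" by auto
        thus "w \<in> F0" unfolding F0_def F1_def using pm_inv[OF pm, of v] by auto
      qed
    qed
    have "(\<Sum>v\<in>F1. g v) = (\<Sum>v\<in>F0. g (mt E v))"
      using sum.reindex_bij_betw[OF b, of g] by simp
    thus ?thesis using gm by simp
  qed
  also have "(\<Sum>v\<in>F0. g v) = (\<Sum>i\<in>FF E. g (i, False))"
  proof -
    have "F0 = (\<lambda>i. (i, False)) ` FF E"
    proof
      show "F0 \<subseteq> (\<lambda>i. (i, False)) ` FF E"
      proof
        fix v assume "v \<in> F0"
        then obtain i where "v = (i, False)" "snd (mt E (i, False)) \<noteq> False" unfolding F0_def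
          by (cases v) auto
        thus "v \<in> (\<lambda>i. (i, False)) ` FF E" unfolding FF_def by auto
      qed
      show "(\<lambda>i. (i, False)) ` FF E \<subseteq> F0" unfolding FF_def F0_def by auto
    qed
    moreover have "inj_on (\<lambda>i. (i, False)) (FF E)" by (auto simp: inj_on_def)
    ultimately show ?thesis by (simp add: sum.reindex)
  qed
  finally show ?thesis unfolding NF_def by simp
qed


lemma psi_F: "c \<in> FF E \<Longrightarrow> psi E (c, False) (a, b) = (if b then - ind (tau E c) a else ind c a)"
  unfolding psi_def mF by (cases b) (simp_all add: ind_def)

lemma iter_F: "i \<in> FF E \<Longrightarrow> (tau E ^^ t) i \<in> FF E"
  using bij_betw_funpow[OF tau_bijF, of t] unfolding bij_betw_def by auto

definition fA :: "nat \<Rightarrow> 'a \<Rightarrow> nat \<Rightarrow> 'a \<Rightarrow> complex" where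
  "fA N i s a = (\<Sum>t<N. om N ^ (s * t) * ind ((tau E ^^ t) i) a)"

definition fB :: "nat \<Rightarrow> nat \<Rightarrow> bool \<Rightarrow> complex" where
  "fB N s b = (if b then - (cnj (om N) ^ s) else 1)"

definition Phi :: "nat \<Rightarrow> 'a \<Rightarrow> nat \<Rightarrow> 'a \<times> bool \<Rightarrow> complex" where
  "Phi N i s x = (\<Sum>t<N. om N ^ (s * t) * psi E ((tau E ^^ t) i, False) x)"

lemma shift_sum:
  fixes h :: "nat \<Rightarrow> complex"
  assumes "h N = h 0"
  shows "(\<Sum>t<N. h (Suc t)) = (\<Sum>t<N. h t)"
proof -
  have "h 0 + (\<Sum>t<N. h (Suc t)) = (\<Sum>t<Suc N. h t)" by (rule sum.lessThan_Suc_shift[symmetric])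
  also have "\<dots> = (\<Sum>t<N. h t) + h N" by simp
  finally show ?thesis using assms by simp
qed

lemma Phi_vt:
  assumes N: "N > 0" and per: "tau E ^^ N = id" and i: "i \<in> FF E"
  shows "Phi N i s = vt (fA N i s) (fB N s)"
proof
  fix x :: "'a \<times> bool"
  obtain a b where x: "x = (a, b)" by (cases x)
  show "Phi N i s x = vt (fA N i s) (fB N s) x"
  proof (cases b)
    case False
    thus ?thesis unfolding x Phi_def vt_def fA_def fB_def using psi_F iter_F[OF i] by simp
  next
    case True
    define h where "h t = om N ^ (s * t) * ind ((tau E ^^ t) i) a" for t
    have hN: "h N = h 0"
    proof -
      have "om N ^ (s * N) = 1" by (metis N mult.commute om_pow_N power_mult power_one)
      thus ?thesis unfolding h_def per by simp
    qed
    have hS: "h (Suc t) = om N ^ s * (om N ^ (s * t) * ind (tau E ((tau E ^^ t) i)) a)" for t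
      unfolding h_def by (simp add: power_add mult_ac)
    define X where "X = (\<Sum>t<N. om N ^ (s * t) * ind (tau E ((tau E ^^ t) i)) a)"
    have "om N ^ s * X = (\<Sum>t<N. h t)"
      unfolding X_def sum_distrib_left hS[symmetric] by (rule shift_sum[OF hN])
    hence "cnj (om N ^ s) * (om N ^ s * X) = cnj (om N ^ s) * (\<Sum>t<N. h t)" by simp
    hence X: "X = cnj (om N) ^ s * fA N i s a"
      unfolding fA_def h_def[symmetric] mult.assoc[symmetric] om_pow_cnj_mult by simp
    have "Phi N i s x = - X"
      unfolding x Phi_def X_def using psi_F iter_F[OF i] True by (simp add: sum_negf)
    thus ?thesis unfolding X x vt_def fB_def using True by simp
  qed
qed

lemma Phi_parseval:
  assumes N: "N > 0" and per: "tau E ^^ N = id"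
  shows "(\<Sum>i\<in>FF E. \<Sum>s<N. Phi N i s x * cnj (Phi N i s y))
     = of_nat N * of_nat N * (\<Sum>i\<in>FF E. psi E (i, False) x * cnj (psi E (i, False) y))"
proof -
  define G where "G j = psi E (j, False) x * cnj (psi E (j, False) y)" for j
  have "(\<Sum>i\<in>FF E. \<Sum>s<N. Phi N i s x * cnj (Phi N i s y)) = (\<Sum>i\<in>FF E. of_nat N * (\<Sum>t<N. G ((tau E ^^ t) i)))"
    unfolding Phi_def G_def by (intro sum.cong refl) (rule parseval[OF N])
  also have "\<dots> = of_nat N * (\<Sum>t<N. \<Sum>i\<in>FF E. G ((tau E ^^ t) i))"
    by (simp add: sum_distrib_left[symmetric] sum.swap[of _ "FF E"])
  also have "\<dots> = of_nat N * (\<Sum>t<N. \<Sum>i\<in>FF E. G i)"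
  proof -
    have "(\<Sum>i\<in>FF E. G ((tau E ^^ t) i)) = (\<Sum>i\<in>FF E. G i)" for t
      using sum.reindex_bij_betw[OF bij_betw_funpow[OF tau_bijF, of t], of G] by simp
    thus ?thesis by simp
  qed
  also have "\<dots> = of_nat N * of_nat N * (\<Sum>i\<in>FF E. G i)" by simp
  finally show ?thesis unfolding G_def .
qed


lemma ind_pair: "ind (a, b) (p, q) = ind a p * ind b q"
  unfolding ind_def by simp

lemma sufficiency: "separable (density_of_graph E)"
proof -
  obtain N where N: "N > 0" and per: "tau E ^^ N = id" using tau_period by blast
  define D where "D = real (2 * num_edges E)"
  have D0: "D > 0" unfolding D_def pm_num_edges[OF pm] by (simp add: finite_UNIV_card_ge_0)
  define NF where "NF = {v. snd (mt E v) = snd v}"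
  define S :: "(('a \<times> bool) + ('a \<times> nat)) set" where "S = Inl ` NF \<union> Inr ` (FF E \<times> {..<N})"
  define cc :: "('a \<times> bool) + ('a \<times> nat) \<Rightarrow> real" where "cc = case_sum (\<lambda>_. 1 / (2 * D)) (\<lambda>_. 1 / (real N * real N * D))"
  define AA :: "('a \<times> bool) + ('a \<times> nat) \<Rightarrow> 'a \<Rightarrow> complex" where "AA = case_sum (\<lambda>v p. ind (fst v) p - ind (fst (mt E v)) p) (\<lambda>(i, s). fA N i s)"
  define BB :: "('a \<times> bool) + ('a \<times> nat) \<Rightarrow> bool \<Rightarrow> complex" where "BB = case_sum (\<lambda>v q. ind (snd v) q) (\<lambda>(i, s). fB N s)"
  define g where "g v x y = psi E v x * cnj (psi E v y)" for v x y
  have vtNF: "vt (AA (Inl v)) (BB (Inl v)) = psi E v" if "v \<in> NF" for v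
  proof
    fix x :: "'a \<times> bool"
    obtain p q where x: "x = (p, q)" by (cases x)
    obtain a b where v: "v = (a, b)" by (cases v)
    have sb: "snd (mt E v) = b" using that unfolding NF_def v by simp
    have mv0: "mt E v = (fst (mt E v), b)" using sb by (simp add: prod_eq_iff)
    obtain a' where mv: "mt E v = (a', b)" using mv0 by blast
    show "vt (AA (Inl v)) (BB (Inl v)) x = psi E v x"
      unfolding x AA_def BB_def vt_def psi_def using mv unfolding v by (simp add: ind_pair left_diff_distrib)
  qed
  have vtF: "vt (AA (Inr (i, s))) (BB (Inr (i, s))) = Phi N i s" if "i \<in> FF E" for i s
    unfolding AA_def BB_def using Phi_vt[OF N per that] by simp
  have rep: "density_of_graph E x y = (\<Sum>z\<in>S. of_real (cc z) * (vt (AA z) (BB z) x * cnj (vt (AA z) (BB z) y)))"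
    for x y
  proof -
    have L: "laplacian E x y = (1/2) * (\<Sum>v\<in>NF. g v x y) + (\<Sum>i\<in>FF E. g (i, False) x y)"
      unfolding L_half[OF pm] g_def[symmetric] NF_def
      by (subst split_sum) (simp_all add: g_def psi_outer_m[OF pm] algebra_simps)
    have P: "(\<Sum>i\<in>FF E. g (i, False) x y) = (\<Sum>i\<in>FF E. \<Sum>s<N. Phi N i s x * cnj (Phi N i s y)) / (of_nat N * of_nat N)"
      unfolding Phi_parseval[OF N per] g_def using N by simp
    have "(\<Sum>z\<in>S. of_real (cc z) * (vt (AA z) (BB z) x * cnj (vt (AA z) (BB z) y)))
        = (\<Sum>z\<in>Inl ` NF. of_real (cc z) * (vt (AA z) (BB z) x * cnj (vt (AA z) (BB z) y)))
          + (\<Sum>z\<in>Inr ` (FF E \<times> {..<N}). of_real (cc z) * (vt (AA z) (BB z) x * cnj (vt (AA z) (BB z) y)))"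
      unfolding S_def by (rule sum.union_disjoint) auto
    also have "(\<Sum>z\<in>Inl ` NF. of_real (cc z) * (vt (AA z) (BB z) x * cnj (vt (AA z) (BB z) y)))
        = (\<Sum>v\<in>NF. of_real (1 / (2 * D)) * g v x y)"
      by (simp add: sum.reindex cc_def vtNF g_def)
    also have "(\<Sum>z\<in>Inr ` (FF E \<times> {..<N}). of_real (cc z) * (vt (AA z) (BB z) x * cnj (vt (AA z) (BB z) y)))
        = (\<Sum>p\<in>FF E \<times> {..<N}. of_real (1 / (real N * real N * D)) * (Phi N (fst p) (snd p) x * cnj (Phi N (fst p) (snd p) y)))"
    proof -
      have vtF': "vt (AA (Inr p)) (BB (Inr p)) = Phi N (fst p) (snd p)" if "p \<in> FF E \<times> {..<N}" for p
        using vtF[of "fst p" "snd p"] that by (cases p) auto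
      show ?thesis by (simp add: sum.reindex cc_def vtF' cong: sum.cong)
    qed
    also have "\<dots> = (\<Sum>i\<in>FF E. \<Sum>s<N. of_real (1 / (real N * real N * D)) * (Phi N i s x * cnj (Phi N i s y)))"
      by (simp add: sum.cartesian_product case_prod_beta)
    finally have R: "(\<Sum>z\<in>S. of_real (cc z) * (vt (AA z) (BB z) x * cnj (vt (AA z) (BB z) y)))
        = of_real (1 / (2 * D)) * (\<Sum>v\<in>NF. g v x y)
          + of_real (1 / (real N * real N * D)) * (\<Sum>i\<in>FF E. \<Sum>s<N. Phi N i s x * cnj (Phi N i s y))"
      by (simp add: sum_distrib_left)
    have Dc: "(of_nat (2 * num_edges E) :: complex) = of_real D" unfolding D_def by simp
    show ?thesis unfolding R density_of_graph_def L P Dc using D0 N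
      by (simp add: field_simps)
  qed
  show ?thesis
  proof (rule sep_from_rep[where S = S and c = cc and A = AA and B = BB])
    show "finite S" unfolding S_def by simp
    show "\<forall>x\<in>S. 0 \<le> cc x" unfolding cc_def using D0 by (auto split: sum.split)
    show "\<And>v w. density_of_graph E v w = (\<Sum>x\<in>S. of_real (cc x) * (vt (AA x) (BB x) v * cnj (vt (AA x) (BB x) w)))"
      by (rule rep)
    show "trace (density_of_graph E) = 1" by (rule pm_trace[OF pm])
  qed
qed

end



theorem theorem4:
  fixes E :: "'a::finite \<times> bool \<Rightarrow> 'a \<times> bool \<Rightarrow> bool"
  assumes "perfect_matching E"
  shows "separable (density_of_graph E) \<longleftrightarrow>
         deg_mat E = deg_mat (partial_transpose_graph E)"
proof
  assume sep: "separable (density_of_graph E)"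
  have "2 * num_edges E = card (UNIV :: ('a \<times> bool) set)" by (rule pm_num_edges[OF assms])
  moreover have "card (UNIV :: ('a \<times> bool) set) > 0" by (simp add: finite_UNIV_card_ge_0)
  ultimately have "num_edges E \<noteq> 0" by auto
  thus "deg_mat E = deg_mat (partial_transpose_graph E)" by (rule necessity[OF sep])
next
  assume "deg_mat E = deg_mat (partial_transpose_graph E)"
  thus "separable (density_of_graph E)" by (rule sufficiency[OF assms])
qed

end
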